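(* Let $G$ be a mirror graph, let $xy$ be an edge of $G$, let $v\in V(G)$ and $v'=v^{\alpha_{xy}}$. Then there exists a path $P=v v_1 v_2\cdots v_{n-1}v'$ in $G$ from $v$ to $v'$ such that $\alpha_{xy}=\alpha_{vv_1}\alpha_{v_1v_2}\alpha_{v_2v_3}\cdots\alpha_{v_{n-1}v'}$.
   Context: A partition $\{E_1,\dots,E_k\}$ of the edges of a finite connected simple graph $G$ is a mirror partition if for every $i$ there is an automorphism $\alpha_i$ with (i) $\alpha_i(u)=v,\alpha_i(v)=u$ for every $uv\in E_i$ and (ii) $G-E_i$ has exactly two components, swapped isomorphically by $\alpha_i$; $G$ is a mirror graph if it has one. Mirror graphs are partial cubes whose mirror partition is the partition into $\Theta$-classes, where $ab\,\Theta\,xy$ iff $d(a,x)+d(b,y)\neq d(a,y)+d(b,x)$. For an edge $xy$ of a mirror graph, $\alpha_{xy}$ denotes the unique automorphism of $G$ that swaps the endpoints of every edge $\Theta$-equivalent to $xy$ (the mirror automorphism of that class); it is an involution and $\alpha_{xy}=\alpha_{x'y'}$ whenever $xy\,\Theta\,x'y'$. Automorphisms act on the right: $v^{\alpha\beta}=(v^{\alpha})^{\beta}$. *)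

theory Defs
  imports Main
begin

definition simple_graph :: "'a set \<Rightarrow> ('a \<Rightarrow> 'a \<Rightarrow> bool) \<Rightarrow> bool" where
  "simple_graph V E \<longleftrightarrow> finite V \<and>
     (\<forall>u v. E u v \<longrightarrow> u \<in> V \<and> v \<in> V \<and> u \<noteq> v \<and> E v u)"

definition walk :: "'a set \<Rightarrow> ('a \<Rightarrow> 'a \<Rightarrow> bool) \<Rightarrow> 'a list \<Rightarrow> bool" where
  "walk V E ps \<longleftrightarrow> ps \<noteq> [] \<and> set ps \<subseteq> V \<and>
     (\<forall>i. Suc i < length ps \<longrightarrow> E (ps ! i) (ps ! Suc i))"

definition gpath :: "'a set \<Rightarrow> ('a \<Rightarrow> 'a \<Rightarrow> bool) \<Rightarrow> 'a list \<Rightarrow> bool" where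
  "gpath V E ps \<longleftrightarrow> walk V E ps \<and> distinct ps"

definition connected_on :: "'a set \<Rightarrow> ('a \<Rightarrow> 'a \<Rightarrow> bool) \<Rightarrow> bool" where
  "connected_on V E \<longleftrightarrow>
     (\<forall>u\<in>V. \<forall>v\<in>V. \<exists>ps. walk V E ps \<and> hd ps = u \<and> last ps = v)"

definition connected_graph :: "'a set \<Rightarrow> ('a \<Rightarrow> 'a \<Rightarrow> bool) \<Rightarrow> bool" where
  "connected_graph V E \<longleftrightarrow> simple_graph V E \<and> V \<noteq> {} \<and> connected_on V E"

definition gdist :: "'a set \<Rightarrow> ('a \<Rightarrow> 'a \<Rightarrow> bool) \<Rightarrow> 'a \<Rightarrow> 'a \<Rightarrow> nat" where
  "gdist V E u v = (LEAST n. \<exists>ps. walk V E ps \<and> hd ps = u \<and> last ps = v \<and> length ps = Suc n)"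

definition automorphism :: "'a set \<Rightarrow> ('a \<Rightarrow> 'a \<Rightarrow> bool) \<Rightarrow> ('a \<Rightarrow> 'a) \<Rightarrow> bool" where
  "automorphism V E \<sigma> \<longleftrightarrow> bij_betw \<sigma> V V \<and>
     (\<forall>u\<in>V. \<forall>v\<in>V. E u v \<longleftrightarrow> E (\<sigma> u) (\<sigma> v))"

definition edges :: "('a \<Rightarrow> 'a \<Rightarrow> bool) \<Rightarrow> 'a set set" where
  "edges E = {{u, v} | u v. E u v}"

definition del_edges :: "('a \<Rightarrow> 'a \<Rightarrow> bool) \<Rightarrow> 'a set set \<Rightarrow> 'a \<Rightarrow> 'a \<Rightarrow> bool" where
  "del_edges E F u v \<longleftrightarrow> E u v \<and> {u, v} \<notin> F"

definition two_components_swapped ::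
  "'a set \<Rightarrow> ('a \<Rightarrow> 'a \<Rightarrow> bool) \<Rightarrow> 'a set set \<Rightarrow> ('a \<Rightarrow> 'a) \<Rightarrow> bool" where
  "two_components_swapped V E F \<alpha> \<longleftrightarrow>
     (\<exists>A B. A \<noteq> {} \<and> B \<noteq> {} \<and> A \<inter> B = {} \<and> A \<union> B = V \<and>
        connected_on A (del_edges E F) \<and> connected_on B (del_edges E F) \<and>
        (\<forall>a\<in>A. \<forall>b\<in>B. \<not> del_edges E F a b) \<and>
        \<alpha> ` A = B \<and> \<alpha> ` B = A \<and>
        (\<forall>u\<in>A. \<forall>w\<in>A. del_edges E F u w \<longleftrightarrow> del_edges E F (\<alpha> u) (\<alpha> w)) \<and>
        (\<forall>u\<in>B. \<forall>w\<in>B. del_edges E F u w \<longleftrightarrow> del_edges E F (\<alpha> u) (\<alpha> w)))"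

definition mirror_partition :: "'a set \<Rightarrow> ('a \<Rightarrow> 'a \<Rightarrow> bool) \<Rightarrow> 'a set set set \<Rightarrow> bool" where
  "mirror_partition V E P \<longleftrightarrow>
     \<Union>P = edges E \<and> {} \<notin> P \<and>
     (\<forall>F1\<in>P. \<forall>F2\<in>P. F1 \<noteq> F2 \<longrightarrow> F1 \<inter> F2 = {}) \<and>
     (\<forall>F\<in>P. \<exists>\<alpha>. automorphism V E \<alpha> \<and>
        (\<forall>u v. E u v \<and> {u, v} \<in> F \<longrightarrow> \<alpha> u = v \<and> \<alpha> v = u) \<and>
        two_components_swapped V E F \<alpha>)"

definition mirror_graph :: "'a set \<Rightarrow> ('a \<Rightarrow> 'a \<Rightarrow> bool) \<Rightarrow> bool" where
  "mirror_graph V E \<longleftrightarrow> connected_graph V E \<and> (\<exists>P. mirror_partition V E P)"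

definition Theta :: "'a set \<Rightarrow> ('a \<Rightarrow> 'a \<Rightarrow> bool) \<Rightarrow> 'a \<Rightarrow> 'a \<Rightarrow> 'a \<Rightarrow> 'a \<Rightarrow> bool" where
  "Theta V E a b x y \<longleftrightarrow> E a b \<and> E x y \<and>
     gdist V E a x + gdist V E b y \<noteq> gdist V E a y + gdist V E b x"

text \<open>The mirror automorphism alpha_xy: the unique automorphism swapping the endpoints of
  every edge Theta-equivalent to xy (taken to be the identity outside V, so that it is
  unique as a HOL function).\<close>
definition mirror_aut :: "'a set \<Rightarrow> ('a \<Rightarrow> 'a \<Rightarrow> bool) \<Rightarrow> 'a \<Rightarrow> 'a \<Rightarrow> 'a \<Rightarrow> 'a" where
  "mirror_aut V E x y = (THE \<sigma>. automorphism V E \<sigma> \<and> (\<forall>w. w \<notin> V \<longrightarrow> \<sigma> w = w) \<and>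
     (\<forall>a b. Theta V E a b x y \<longrightarrow> \<sigma> a = b \<and> \<sigma> b = a))"

text \<open>Right action: the product alpha_{p0p1} alpha_{p1p2} ... applied to w, i.e. first
  alpha_{p0p1}, then alpha_{p1p2}, etc.\<close>
definition path_product :: "'a set \<Rightarrow> ('a \<Rightarrow> 'a \<Rightarrow> bool) \<Rightarrow> 'a list \<Rightarrow> 'a \<Rightarrow> 'a" where
  "path_product V E ps w =
     foldl (\<lambda>z i. mirror_aut V E (ps ! i) (ps ! Suc i) z) w [0..<length ps - 1]"

end

theory Submission
  imports Defs
begin

lemma walk_iff: "walk V E ps \<longleftrightarrow> ps \<noteq> [] \<and> set ps \<subseteq> V \<and> successively E ps"
  unfolding walk_def successively_conv_nth by blast

lemma cross_decomp:
  "hd ps \<in> X \<Longrightarrow> last ps \<notin> X \<Longrightarrow> ps \<noteq> [] \<Longrightarrow> \<exists>xs c c' ys. ps = xs @ c # c' # ys \<and> c \<in> X \<and> c' \<notin> X"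
proof (induction ps)
  case Nil then show ?case by simp
next
  case (Cons a ps)
  show ?case
  proof (cases ps)
    case Nil with Cons show ?thesis by simp
  next
    case (Cons b qs)
    show ?thesis
    proof (cases "b \<in> X")
      case True
      with Cons.IH[of] Cons.prems \<open>ps = b # qs\<close> obtain xs c c' ys where "ps = xs @ c # c' # ys" "c \<in> X" "c' \<notin> X"
        by auto
      then show ?thesis by (rule_tac x="a#xs" in exI) auto
    next
      case False
      with Cons.prems \<open>ps = b # qs\<close> show ?thesis by (rule_tac x="[]" in exI) auto
    qed
  qed
qed

locale sgraph =
  fixes V :: "'a set" and E :: "'a \<Rightarrow> 'a \<Rightarrow> bool"
  assumes sg: "simple_graph V E" and conn: "connected_on V E"
begin

lemma finV: "finite V" using sg by (simp add: simple_graph_def)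
lemma E_V: "E u v \<Longrightarrow> u \<in> V \<and> v \<in> V" using sg by (simp add: simple_graph_def)
lemma E_sym: "E u v \<Longrightarrow> E v u" using sg by (simp add: simple_graph_def)
lemma E_neq: "E u v \<Longrightarrow> u \<noteq> v" using sg by (simp add: simple_graph_def)

lemma walk_single: "v \<in> V \<Longrightarrow> walk V E [v]" by (simp add: walk_iff)
lemma walk_edge: "E u v \<Longrightarrow> walk V E [u,v]" using E_V by (simp add: walk_iff)

lemma walk_rev: "walk V E ps \<Longrightarrow> walk V E (rev ps)"
  by (auto simp: walk_iff intro: successively_mono E_sym)

lemma walk_join: "walk V E xs \<Longrightarrow> walk V E ys \<Longrightarrow> last xs = hd ys \<Longrightarrow> walk V E (xs @ tl ys)"
  apply (cases ys)
   apply (simp add: walk_iff)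
  apply (auto simp: walk_iff successively_append_iff successively_Cons)
  done

lemma walk_appendD: "walk V E (xs @ ys) \<Longrightarrow> xs \<noteq> [] \<Longrightarrow> ys \<noteq> [] \<Longrightarrow> walk V E xs \<and> walk V E ys \<and> E (last xs) (hd ys)"
  by (auto simp: walk_iff successively_append_iff)

lemma walk_append: "walk V E xs \<Longrightarrow> walk V E ys \<Longrightarrow> E (last xs) (hd ys) \<Longrightarrow> walk V E (xs @ ys)"
  by (auto simp: walk_iff successively_append_iff)

lemma conn_walk: "u \<in> V \<Longrightarrow> v \<in> V \<Longrightarrow> \<exists>ps. walk V E ps \<and> hd ps = u \<and> last ps = v"
  using conn by (simp add: connected_on_def)

abbreviation d where "d \<equiv> gdist V E"

lemma d_le: "walk V E ps \<Longrightarrow> hd ps = u \<Longrightarrow> last ps = v \<Longrightarrow> d u v \<le> length ps - 1"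
proof -
  assume a: "walk V E ps" "hd ps = u" "last ps = v"
  then have "ps \<noteq> []" by (simp add: walk_def)
  then have "length ps = Suc (length ps - 1)" by simp
  then show ?thesis unfolding gdist_def using a by (intro Least_le) blast
qed

lemma d_geo: "u \<in> V \<Longrightarrow> v \<in> V \<Longrightarrow> \<exists>ps. walk V E ps \<and> hd ps = u \<and> last ps = v \<and> length ps = Suc (d u v)"
proof -
  assume "u \<in> V" "v \<in> V"
  then obtain ps where ps: "walk V E ps" "hd ps = u" "last ps = v" using conn_walk by blast
  have "ps \<noteq> []" using ps by (simp add: walk_def)
  then have "length ps = Suc (length ps - 1)" by simp
  then have "\<exists>n. \<exists>ps. walk V E ps \<and> hd ps = u \<and> last ps = v \<and> length ps = Suc n"
    using ps by blast
  then show ?thesis unfolding gdist_def by (rule LeastI_ex)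
qed

lemma d_refl: "u \<in> V \<Longrightarrow> d u u = 0"
  using d_le[OF walk_single, of u u u] by simp

lemma d_edge: "E u v \<Longrightarrow> d u v \<le> 1"
  using d_le[OF walk_edge, of u v u v] by simp

lemma d_sym_le: "u \<in> V \<Longrightarrow> v \<in> V \<Longrightarrow> d v u \<le> d u v"
proof -
  assume "u \<in> V" "v \<in> V"
  then obtain ps where ps: "walk V E ps" "hd ps = u" "last ps = v" "length ps = Suc (d u v)"
    using d_geo by blast
  have "ps \<noteq> []" using ps by (auto simp: walk_def)
  then have "d v u \<le> length (rev ps) - 1"
    using ps by (intro d_le walk_rev) (auto simp: hd_rev last_rev)
  then show ?thesis using ps by simp
qed

lemma d_sym: "u \<in> V \<Longrightarrow> v \<in> V \<Longrightarrow> d u v = d v u"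
  using d_sym_le by (meson le_antisym)

lemma d_tri: "u \<in> V \<Longrightarrow> v \<in> V \<Longrightarrow> w \<in> V \<Longrightarrow> d u w \<le> d u v + d v w"
proof -
  assume V: "u \<in> V" "v \<in> V" "w \<in> V"
  obtain xs where xs: "walk V E xs" "hd xs = u" "last xs = v" "length xs = Suc (d u v)"
    using d_geo V by blast
  obtain ys where ys: "walk V E ys" "hd ys = v" "last ys = w" "length ys = Suc (d v w)"
    using d_geo V by blast
  have ne: "xs \<noteq> []" "ys \<noteq> []" using xs ys by (auto simp: walk_def)
  have w: "walk V E (xs @ tl ys)" using walk_join xs ys by simp
  have "last (xs @ tl ys) = w"
  proof (cases "tl ys = []")
    case True
    then have "ys = [hd ys]" using ne by (cases ys) auto
    then show ?thesis using xs ys True by (metis append_Nil2 last.simps)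
  next
    case False then show ?thesis using ys ne by (cases ys) auto
  qed
  moreover have "hd (xs @ tl ys) = u" using xs ne by simp
  ultimately have "d u w \<le> length (xs @ tl ys) - 1" using d_le w by blast
  then show ?thesis using xs ys by simp
qed

lemma d_split:
  assumes ps: "walk V E ps" "hd ps = s" "last ps = b" "length ps = Suc (d s b)"
    and eq: "ps = xs @ c # c' # ys"
  shows "d s c + 1 + d c' b \<le> d s b"
proof -
  have w1: "walk V E (xs @ [c])" and w2: "walk V E (c' # ys)"
    using walk_appendD[of "xs @ [c]" "c' # ys"] ps(1) eq by auto
  have "d s c \<le> length (xs @ [c]) - 1"
    using w1 ps(2) eq by (intro d_le) (auto simp: hd_append)
  moreover have "d c' b \<le> length (c' # ys) - 1"
    using w2 ps(3) eq by (intro d_le) auto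
  ultimately show ?thesis using ps(4) eq by simp
qed

lemma aut_inv:
  assumes "automorphism V E \<sigma>" shows "automorphism V E (inv_into V \<sigma>)"
proof -
  have b: "bij_betw \<sigma> V V" using assms by (simp add: automorphism_def)
  have bi: "bij_betw (inv_into V \<sigma>) V V" using bij_betw_inv_into[OF b] .
  have "\<forall>u\<in>V. \<forall>v\<in>V. E u v \<longleftrightarrow> E (inv_into V \<sigma> u) (inv_into V \<sigma> v)"
  proof (intro ballI)
    fix u v assume uv: "u \<in> V" "v \<in> V"
    have iu: "inv_into V \<sigma> u \<in> V" "inv_into V \<sigma> v \<in> V" using bi uv bij_betwE by blast+
    have "\<sigma> (inv_into V \<sigma> u) = u" "\<sigma> (inv_into V \<sigma> v) = v"
      using b uv by (simp_all add: bij_betw_def f_inv_into_f)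
    then show "E u v \<longleftrightarrow> E (inv_into V \<sigma> u) (inv_into V \<sigma> v)"
      using assms iu by (auto simp: automorphism_def)
  qed
  then show ?thesis using bi by (simp add: automorphism_def)
qed

lemma aut_V: "automorphism V E \<sigma> \<Longrightarrow> u \<in> V \<Longrightarrow> \<sigma> u \<in> V"
  by (auto simp: automorphism_def bij_betw_def)

lemma walk_map: "automorphism V E \<sigma> \<Longrightarrow> walk V E ps \<Longrightarrow> walk V E (map \<sigma> ps)"
proof -
  assume a: "automorphism V E \<sigma>" and w: "walk V E ps"
  have "successively E ps" "set ps \<subseteq> V" "ps \<noteq> []" using w by (auto simp: walk_iff)
  moreover have "successively (\<lambda>x y. E (\<sigma> x) (\<sigma> y)) ps"
    using \<open>successively E ps\<close> \<open>set ps \<subseteq> V\<close>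
    by (subst successively_cong[where Q=E]) (use a in \<open>auto simp: automorphism_def\<close>)
  ultimately show ?thesis using a by (auto simp: walk_iff successively_map intro: aut_V)
qed

lemma d_aut_le: "automorphism V E \<sigma> \<Longrightarrow> u \<in> V \<Longrightarrow> v \<in> V \<Longrightarrow> d (\<sigma> u) (\<sigma> v) \<le> d u v"
proof -
  assume a: "automorphism V E \<sigma>" and uv: "u \<in> V" "v \<in> V"
  obtain ps where ps: "walk V E ps" "hd ps = u" "last ps = v" "length ps = Suc (d u v)"
    using d_geo uv by blast
  have ne: "ps \<noteq> []" using ps by (auto simp: walk_def)
  have "d (\<sigma> u) (\<sigma> v) \<le> length (map \<sigma> ps) - 1"
    using ps ne by (intro d_le walk_map a) (auto simp: hd_map last_map)
  then show ?thesis using ps by simp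
qed

lemma d_aut: "automorphism V E \<sigma> \<Longrightarrow> u \<in> V \<Longrightarrow> v \<in> V \<Longrightarrow> d (\<sigma> u) (\<sigma> v) = d u v"
proof -
  assume a: "automorphism V E \<sigma>" and uv: "u \<in> V" "v \<in> V"
  have b: "bij_betw \<sigma> V V" using a by (simp add: automorphism_def)
  have "inv_into V \<sigma> (\<sigma> u) = u" "inv_into V \<sigma> (\<sigma> v) = v"
    using b uv by (auto simp: bij_betw_def inv_into_f_f)
  then have "d u v \<le> d (\<sigma> u) (\<sigma> v)"
    using d_aut_le[OF aut_inv[OF a], of "\<sigma> u" "\<sigma> v"] aut_V[OF a] uv by simp
  then show ?thesis using d_aut_le[OF a uv] by simp
qed


definition cutdata where
  "cutdata F \<alpha> A B \<longleftrightarrow> A \<union> B = V \<and> A \<inter> B = {} \<and> automorphism V E \<alpha> \<and> \<alpha> ` A = B \<and> \<alpha> ` B = A \<and>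
     (\<forall>u v. E u v \<longrightarrow> ({u,v} \<in> F \<longleftrightarrow> (u \<in> A \<longleftrightarrow> v \<in> B))) \<and>
     (\<forall>u v. E u v \<and> {u,v} \<in> F \<longrightarrow> \<alpha> u = v \<and> \<alpha> v = u) \<and>
     connected_on A (del_edges E F) \<and> connected_on B (del_edges E F) \<and>
     (\<exists>u v. E u v \<and> {u,v} \<in> F)"

lemma cut_sym: "cutdata F \<alpha> A B \<Longrightarrow> cutdata F \<alpha> B A"
proof -
  assume c: "cutdata F \<alpha> A B"
  have ed: "\<forall>u v. E u v \<longrightarrow> ({u,v} \<in> F \<longleftrightarrow> (u \<in> B \<longleftrightarrow> v \<in> A))"
  proof (intro allI impI)
    fix u v assume "E u v"
    then have "u \<in> V" "v \<in> V" "{u,v} \<in> F \<longleftrightarrow> (u \<in> A \<longleftrightarrow> v \<in> B)" using E_V c by (auto simp: cutdata_def)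
    moreover have "A \<union> B = V" "A \<inter> B = {}" using c by (auto simp: cutdata_def)
    ultimately show "{u,v} \<in> F \<longleftrightarrow> (u \<in> B \<longleftrightarrow> v \<in> A)" by blast
  qed
  show ?thesis using c ed unfolding cutdata_def by (simp add: Un_commute Int_commute)
qed

lemma cutD:
  assumes "cutdata F \<alpha> A B"
  shows "A \<union> B = V" "A \<inter> B = {}" "automorphism V E \<alpha>" "\<alpha> ` A = B" "\<alpha> ` B = A"
    "connected_on A (del_edges E F)" "connected_on B (del_edges E F)" "\<exists>u v. E u v \<and> {u,v} \<in> F"
  using assms by (auto simp: cutdata_def)

lemma cut_edge: "cutdata F \<alpha> A B \<Longrightarrow> E u v \<Longrightarrow> ({u,v} \<in> F \<longleftrightarrow> (u \<in> A \<longleftrightarrow> v \<in> B))"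
  by (auto simp: cutdata_def)

lemma cut_swap0: "cutdata F \<alpha> A B \<Longrightarrow> E u v \<Longrightarrow> {u,v} \<in> F \<Longrightarrow> \<alpha> u = v \<and> \<alpha> v = u"
  by (auto simp: cutdata_def)

lemma cut_swap: "cutdata F \<alpha> A B \<Longrightarrow> E a b \<Longrightarrow> a \<in> A \<Longrightarrow> b \<in> B \<Longrightarrow> \<alpha> a = b \<and> \<alpha> b = a \<and> {a,b} \<in> F"
  using cut_edge cut_swap0 by blast

lemma cut_ABV: "cutdata F \<alpha> A B \<Longrightarrow> u \<in> V \<Longrightarrow> u \<notin> A \<Longrightarrow> u \<in> B"
  by (auto simp: cutdata_def)

lemma E2:
  assumes c: "cutdata F \<alpha> A B" and ab: "E a b" "a \<in> A" "b \<in> B" and s: "s \<in> A"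
  shows "d s b = d s a + 1"
proof -
  have sV: "s \<in> V" and aV: "a \<in> V" and bV: "b \<in> V" using s cutD(1)[OF c] ab E_V by auto
  obtain ps where ps: "walk V E ps" "hd ps = s" "last ps = b" "length ps = Suc (d s b)"
    using d_geo sV bV by blast
  have ne: "ps \<noteq> []" using ps by (simp add: walk_def)
  have "b \<notin> A" using ab cutD(2)[OF c] by blast
  then obtain xs c1 c2 ys where eq: "ps = xs @ c1 # c2 # ys" and c12: "c1 \<in> A" "c2 \<notin> A"
    using cross_decomp[of ps A] ps s ne by auto
  have Ec: "E c1 c2" using ps(1) eq by (auto simp: walk_iff successively_append_iff)
  have cV: "c1 \<in> V" "c2 \<in> V" using E_V Ec by auto
  have c2B: "c2 \<in> B" using cut_ABV[OF c cV(2) c12(2)] .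
  have sw1: "\<alpha> c2 = c1" using cut_swap[OF c Ec c12(1) c2B] by simp
  have sw2: "\<alpha> b = a" using cut_swap[OF c ab] by simp
  have "d c2 b = d c1 a" using d_aut[OF cutD(3)[OF c] cV(2) bV] sw1 sw2 by simp
  moreover have "d s c1 + 1 + d c2 b \<le> d s b" using d_split[OF ps eq] .
  moreover have "d s a \<le> d s c1 + d c1 a" using d_tri sV cV aV by blast
  moreover have "d s b \<le> d s a + d a b" using d_tri sV aV bV by blast
  moreover have "d a b \<le> 1" using d_edge ab by blast
  ultimately show ?thesis by linarith
qed

lemma E2':
  assumes c: "cutdata F \<alpha> A B" and ab: "E a b" "a \<in> A" "b \<in> B" and s: "s \<in> B"
  shows "d s a = d s b + 1"
  using E2[OF cut_sym[OF c] E_sym[OF ab(1)] ab(3) ab(2) s] .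

lemma side_walk:
  assumes c: "cutdata F \<alpha> A B"
  shows "successively (del_edges E F) ps \<Longrightarrow> ps \<noteq> [] \<Longrightarrow> (hd ps \<in> A \<longleftrightarrow> last ps \<in> A)"
proof (induction ps rule: induct_list012)
  case (3 x y xs)
  then have "del_edges E F x y" by simp
  then have "E x y" "{x,y} \<notin> F" by (auto simp: del_edges_def)
  then have "x \<in> A \<longleftrightarrow> y \<in> A" using cut_edge[OF c] E_V cutD(1,2)[OF c] by blast
  then show ?case using 3 by simp
qed auto

lemma Theta_iff:
  assumes c: "cutdata L \<beta> X Y" and xy: "E x y" "{x,y} \<in> L" and ab: "E a b"
  shows "Theta V E a b x y \<longleftrightarrow> {a,b} \<in> L"
proof -
  have gen: "Theta V E a b x y \<longleftrightarrow> {a,b} \<in> L"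
    if c: "cutdata L \<beta> X Y" and xX: "x \<in> X" and yY: "y \<in> Y" for X Y
  proof -
    have aV: "a \<in> V" "b \<in> V" using ab E_V by auto
    have r: "d s y = d s x + 1" if "s \<in> X" for s using E2[OF c xy(1) xX yY that] .
    have r': "d s x = d s y + 1" if "s \<in> Y" for s using E2'[OF c xy(1) xX yY that] .
    have XY: "u \<in> X \<or> u \<in> Y" "\<not> (u \<in> X \<and> u \<in> Y)" if "u \<in> V" for u
      using cutD(1,2)[OF c] that by auto
    have "{a,b} \<in> L \<longleftrightarrow> (a \<in> X \<longleftrightarrow> b \<in> Y)" using cut_edge[OF c ab] .
    moreover have "Theta V E a b x y \<longleftrightarrow> d a x + d b y \<noteq> d a y + d b x"
      unfolding Theta_def using xy(1) ab by simp
    ultimately show ?thesis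
    proof -
      assume L: "{a,b} \<in> L \<longleftrightarrow> (a \<in> X \<longleftrightarrow> b \<in> Y)" and T: "Theta V E a b x y \<longleftrightarrow> d a x + d b y \<noteq> d a y + d b x"
      consider "a \<in> X" "b \<in> X" | "a \<in> X" "b \<in> Y" | "a \<in> Y" "b \<in> X" | "a \<in> Y" "b \<in> Y"
        using XY(1)[OF aV(1)] XY(1)[OF aV(2)] by blast
      then show ?thesis
      proof cases
        case 1 then show ?thesis using L T r[of a] r[of b] XY(2)[OF aV(2)] by auto
      next
        case 2 then show ?thesis using L T r[of a] r'[of b] XY(2)[OF aV(2)] by auto
      next
        case 3 then show ?thesis using L T r'[of a] r[of b] XY(2)[OF aV(1)] XY(2)[OF aV(2)] by auto
      next
        case 4 then show ?thesis using L T r'[of a] r'[of b] XY(2)[OF aV(1)] by auto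
      qed
    qed
  qed
  have xV: "x \<in> V" "y \<in> V" using xy E_V by auto
  have "(x \<in> X \<longleftrightarrow> y \<in> Y)" using cut_edge[OF c xy(1)] xy(2) by simp
  then consider "x \<in> X" "y \<in> Y" | "x \<in> Y" "y \<in> X" using cutD(1)[OF c] xV by blast
  then show ?thesis
  proof cases
    case 1 then show ?thesis using gen[OF c] by blast
  next
    case 2 then show ?thesis using gen[OF cut_sym[OF c]] by blast
  qed
qed

lemma cut_card: "cutdata F \<alpha> A B \<Longrightarrow> card A = card B"
proof -
  assume c: "cutdata F \<alpha> A B"
  have "inj_on \<alpha> V" using cutD(3)[OF c] by (simp add: automorphism_def bij_betw_def)
  then have "inj_on \<alpha> A" using cutD(1)[OF c] by (auto intro: inj_on_subset)
  then show ?thesis using card_image cutD(4)[OF c] by metis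
qed


lemma aut_comp: "automorphism V E \<sigma> \<Longrightarrow> automorphism V E \<tau> \<Longrightarrow> automorphism V E (\<sigma> \<circ> \<tau>)"
proof -
  assume a: "automorphism V E \<sigma>" and b: "automorphism V E \<tau>"
  have "bij_betw (\<sigma> \<circ> \<tau>) V V" using a b by (auto intro: bij_betw_trans simp: automorphism_def)
  moreover have "\<forall>u\<in>V. \<forall>v\<in>V. E u v \<longleftrightarrow> E ((\<sigma> \<circ> \<tau>) u) ((\<sigma> \<circ> \<tau>) v)"
  proof (intro ballI)
    fix u v assume "u \<in> V" "v \<in> V"
    moreover then have "\<tau> u \<in> V" "\<tau> v \<in> V" using aut_V b by auto
    ultimately show "E u v \<longleftrightarrow> E ((\<sigma> \<circ> \<tau>) u) ((\<sigma> \<circ> \<tau>) v)"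
      using a b by (auto simp: automorphism_def)
  qed
  ultimately show ?thesis by (simp add: automorphism_def)
qed

lemma walk_to_path:
  "walk V E ps \<Longrightarrow> \<exists>qs. walk V E qs \<and> distinct qs \<and> hd qs = hd ps \<and> last qs = last ps \<and> set qs \<subseteq> set ps"
proof (induction "length ps" arbitrary: ps rule: less_induct)
  case less
  show ?case
  proof (cases "distinct ps")
    case True then show ?thesis using less.prems by blast
  next
    case False
    then obtain xs y ys zs where eq: "ps = xs @ [y] @ ys @ [y] @ zs" using not_distinct_decomp by blast
    let ?ps = "xs @ [y] @ zs"
    have s: "successively E ps" "set ps \<subseteq> V" using less.prems by (auto simp: walk_iff)
    have "successively E (xs @ [y])" using s(1) eq by (auto simp: successively_append_iff)
    moreover have "successively E ((xs @ [y] @ ys) @ ([y] @ zs))" using s(1) eq by simp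
    then have "successively E ([y] @ zs)" by (simp only: successively_append_iff)
    ultimately have "successively E ?ps" by (auto simp: successively_append_iff)
    then have w: "walk V E ?ps" using s(2) eq by (auto simp: walk_iff)
    have "length ?ps < length ps" using eq by simp
    then obtain qs where qs: "walk V E qs" "distinct qs" "hd qs = hd ?ps" "last qs = last ?ps" "set qs \<subseteq> set ?ps"
      using less.hyps w by blast
    have "hd ?ps = hd ps" using eq by (cases xs) auto
    moreover have "last ?ps = last ps" using eq by (cases zs) auto
    moreover have "set ?ps \<subseteq> set ps" using eq by auto
    ultimately show ?thesis using qs by auto
  qed
qed

end

fun pp :: "('a \<Rightarrow> 'a \<Rightarrow> 'a \<Rightarrow> 'a) \<Rightarrow> 'a list \<Rightarrow> 'a \<Rightarrow> 'a" where
  "pp M (a # b # xs) w = pp M (b # xs) (M a b w)"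
| "pp M xs w = w"

lemma pp_eq: "foldl (\<lambda>z i. M (ps ! i) (ps ! Suc i) z) w [0..<length ps - 1] = pp M ps w"
proof (induction ps arbitrary: w rule: induct_list012)
  case (3 a b xs)
  have e1: "[0..<Suc (length xs)] = 0 # [Suc 0..<Suc (length xs)]" by (rule upt_conv_Cons) simp
  have e2: "[Suc 0..<Suc (length xs)] = map Suc [0..<length xs]" by (rule map_Suc_upt[symmetric])
  have "[0..<length (a # b # xs) - 1] = 0 # map Suc [0..<length (b # xs) - 1]"
    using e1 e2 by (simp del: upt_Suc)
  then show ?case using 3(2)[of "M a b w"] by (simp add: foldl_map)
qed auto

lemma pp_append: "xs \<noteq> [] \<Longrightarrow> ys \<noteq> [] \<Longrightarrow> pp M (xs @ ys) w = pp M ys (M (last xs) (hd ys) (pp M xs w))"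
proof (induction xs arbitrary: w rule: induct_list012)
  case (2 x) then show ?case by (cases ys) auto
next
  case (3 a b xs) then show ?case by simp
qed auto

lemma pp_rev:
  assumes H: "\<And>a b. E a b \<Longrightarrow> M a b = M b a \<and> (\<forall>u\<in>V. M a b u \<in> V \<and> M a b (M a b u) = u)"
  shows "successively E Q \<Longrightarrow> u \<in> V \<Longrightarrow> pp M Q u \<in> V \<and> pp M (rev Q) (pp M Q u) = u"
proof (induction Q arbitrary: u rule: induct_list012)
  case (3 a b rest)
  have ab: "E a b" and sr: "successively E (b # rest)" using 3(3) by auto
  have v: "M a b u \<in> V" using H[OF ab] 3(4) by blast
  note IH = 3(2)[OF sr v]
  have "pp M (rev (a # b # rest)) (pp M (a # b # rest) u) = pp M (rev (b # rest) @ [a]) (pp M (b # rest) (M a b u))"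
    by simp
  also have "\<dots> = M b a (pp M (rev (b # rest)) (pp M (b # rest) (M a b u)))"
    by (subst pp_append) (auto simp: last_rev)
  also have "\<dots> = u" using IH H[OF ab] 3(4) by auto
  finally show ?case using IH by simp
qed auto

lemma pp_map:
  assumes H: "\<And>a b u. E a b \<Longrightarrow> u \<in> V \<Longrightarrow> M (f a) (f b) u = f (M a b (f u)) \<and> M a b u \<in> V"
    and fV: "\<And>u. u \<in> V \<Longrightarrow> f u \<in> V \<and> f (f u) = u"
  shows "successively E ys \<Longrightarrow> u \<in> V \<Longrightarrow> pp M (map f ys) u = f (pp M ys (f u))"
proof (induction ys arbitrary: u rule: induct_list012)
  case (3 a b rest)
  have ab: "E a b" and sr: "successively E (b # rest)" using 3(3) by auto
  have fu: "f u \<in> V" using fV 3(4) by blast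
  have e: "M (f a) (f b) u = f (M a b (f u))" using H[OF ab 3(4)] by blast
  have mV: "M a b (f u) \<in> V" using H[OF ab fu] by blast
  have "pp M (map f (a # b # rest)) u = pp M (map f (b # rest)) (M (f a) (f b) u)" by simp
  also have "\<dots> = f (pp M (b # rest) (f (M (f a) (f b) u)))"
    using 3(2)[OF sr] e mV fV by simp
  also have "\<dots> = f (pp M (b # rest) (M a b (f u)))" using e mV fV by simp
  finally show ?case by simp
qed (auto simp: fV)


locale mgraph = sgraph +
  fixes P assumes mp: "mirror_partition V E P"
begin

definition al where
  "al F = (SOME \<alpha>. automorphism V E \<alpha> \<and> (\<forall>u v. E u v \<and> {u, v} \<in> F \<longrightarrow> \<alpha> u = v \<and> \<alpha> v = u) \<and>
        two_components_swapped V E F \<alpha>)"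

lemma mp1: "\<Union>P = edges E" using mp[unfolded mirror_partition_def] by (rule conjunct1)
lemma mp2: "{} \<notin> P" using conjunct2[OF mp[unfolded mirror_partition_def]] by (rule conjunct1)
lemma mp3: "\<forall>G\<in>P. \<exists>\<alpha>. automorphism V E \<alpha> \<and> (\<forall>u v. E u v \<and> {u, v} \<in> G \<longrightarrow> \<alpha> u = v \<and> \<alpha> v = u) \<and>
        two_components_swapped V E G \<alpha>"
  using conjunct2[OF conjunct2[OF conjunct2[OF mp[unfolded mirror_partition_def]]]] .

lemma class_ex: "E a b \<Longrightarrow> \<exists>K\<in>P. {a,b} \<in> K"
proof -
  assume "E a b"
  then have "{a,b} \<in> edges E" by (auto simp: edges_def)
  then show ?thesis using mp by (auto simp: mirror_partition_def)
qed

lemma cut_ex: assumes F: "F \<in> P" shows "\<exists>A B. cutdata F (al F) A B"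
proof -
  let ?Q = "\<lambda>\<alpha>. automorphism V E \<alpha> \<and> (\<forall>u v. E u v \<and> {u, v} \<in> F \<longrightarrow> \<alpha> u = v \<and> \<alpha> v = u) \<and>
        two_components_swapped V E F \<alpha>"
  have "\<exists>\<alpha>. ?Q \<alpha>" using mp3 F by (rule bspec)
  then have q: "?Q (al F)" unfolding al_def by (rule someI_ex)
  have tcs: "two_components_swapped V E F (al F)" using q by (elim conjE)
  obtain A B where AB: "A \<noteq> {}" "B \<noteq> {}" "A \<inter> B = {}" "A \<union> B = V"
        "connected_on A (del_edges E F)" "connected_on B (del_edges E F)"
        "\<forall>a\<in>A. \<forall>b\<in>B. \<not> del_edges E F a b" "al F ` A = B" "al F ` B = A"
    using tcs unfolding two_components_swapped_def by (elim exE conjE) (rule that; assumption)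
  have sw: "\<forall>u v. E u v \<and> {u, v} \<in> F \<longrightarrow> al F u = v \<and> al F v = u" using q by (elim conjE)
  have cut: "\<forall>u v. E u v \<longrightarrow> ({u,v} \<in> F \<longleftrightarrow> (u \<in> A \<longleftrightarrow> v \<in> B))"
  proof (intro allI impI)
    fix u v assume e: "E u v"
    then have uv: "u \<in> V" "v \<in> V" using E_V by auto
    show "{u,v} \<in> F \<longleftrightarrow> (u \<in> A \<longleftrightarrow> v \<in> B)"
    proof
      assume "{u,v} \<in> F"
      then have h: "al F u = v" "al F v = u" using sw e by auto
      show "u \<in> A \<longleftrightarrow> v \<in> B"
      proof
        assume "u \<in> A" then have "al F u \<in> al F ` A" by (rule imageI)
        then show "v \<in> B" using h AB(8) by simp
      next
        assume "v \<in> B" then have "al F v \<in> al F ` B" by (rule imageI)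
        then show "u \<in> A" using h AB(9) by simp
      qed
    next
      assume h: "u \<in> A \<longleftrightarrow> v \<in> B"
      show "{u,v} \<in> F"
      proof (cases "u \<in> A")
        case True
        then have "v \<in> B" using h by simp
        then show ?thesis using AB(7) True e unfolding del_edges_def by blast
      next
        case False
        then have "u \<in> B" "v \<in> A" using h AB(3,4) uv by blast+
        then have "{v,u} \<in> F" using AB(7) E_sym[OF e] unfolding del_edges_def by blast
        then show ?thesis by (simp add: insert_commute)
      qed
    qed
  qed
  have "F \<noteq> {}" using mp2 F by metis
  then obtain e where "e \<in> F" by blast
  then have "e \<in> edges E" using mp1 F by blast
  then obtain u v where "e = {u,v}" "E u v" by (auto simp: edges_def)
  then have ex: "\<exists>u v. E u v \<and> {u,v} \<in> F" using \<open>e \<in> F\<close> by blast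
  have "cutdata F (al F) A B" unfolding cutdata_def
  proof (intro conjI)
    show "automorphism V E (al F)" using q by blast
  qed (fact AB cut sw ex)+
  then show ?thesis by blast
qed

lemma cut_edge_ex: "cutdata F \<alpha> A B \<Longrightarrow> \<exists>z z'. E z z' \<and> z \<in> A \<and> z' \<in> B \<and> {z,z'} \<in> F"
proof -
  assume c: "cutdata F \<alpha> A B"
  obtain u v where uv: "E u v" "{u,v} \<in> F" using cutD(8)[OF c] by blast
  then have "u \<in> A \<longleftrightarrow> v \<in> B" using cut_edge[OF c] by blast
  moreover have "u \<in> V" "v \<in> V" using uv E_V by auto
  ultimately consider "u \<in> A" "v \<in> B" | "v \<in> A" "u \<in> B" using cutD(1,2)[OF c] by blast
  then show ?thesis
  proof cases
    case 1 then show ?thesis using uv by blast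
  next
    case 2
    have "{v,u} \<in> F" using uv(2) by (simp add: insert_commute)
    then show ?thesis using 2 E_sym[OF uv(1)] by blast
  qed
qed

lemma D:
  assumes c: "cutdata F \<alpha> A B" and st: "s \<in> B" "t \<in> B" and eq: "\<forall>a\<in>A. d s a = d t a"
  shows "s = t"
proof (rule ccontr)
  assume ne: "s \<noteq> t"
  have sV: "s \<in> V" "t \<in> V" using st cutD(1)[OF c] by auto
  obtain ps where ps: "walk V E ps" "hd ps = s" "last ps = t" "length ps = Suc (d s t)"
    using d_geo sV by blast
  obtain s1 rest where eqps: "ps = s # s1 # rest"
  proof (cases ps)
    case Nil then show ?thesis using ps by (simp add: walk_def)
  next
    case (Cons a l)
    then show ?thesis using ps ne that by (cases l) auto
  qed
  have es: "E s s1" using ps(1) eqps by (simp add: walk_iff)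
  obtain K where K: "K \<in> P" "{s,s1} \<in> K" using class_ex[OF es] by blast
  obtain X0 Y0 where c0: "cutdata K (al K) X0 Y0" using cut_ex[OF K(1)] by blast
  have s1V: "s1 \<in> V" using es E_V by auto
  have split: "d s s + 1 + d s1 t \<le> d s t" using d_split[OF ps, of "[]" s s1 rest] eqps by simp
  have main: False if cX: "cutdata K (al K) X Y" and sX: "s \<in> X" for X Y
  proof -
    have s1Y: "s1 \<in> Y" using cut_edge[OF cX es] K(2) sX by simp
    have tY: "t \<in> Y"
    proof (rule ccontr)
      assume "t \<notin> Y"
      then have tX: "t \<in> X" using cutD(1)[OF cX] sV by blast
      have "d t s1 = d t s + 1" using E2[OF cX es sX s1Y tX] .
      moreover have "d t s1 = d s1 t" "d t s = d s t" using d_sym sV s1V by auto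
      ultimately show False using split by simp
    qed
    have cardXY: "card X = card Y" using cut_card[OF cX] .
    have cardAB: "card A = card B" using cut_card[OF c] .
    have fin: "finite X" "finite Y" "finite A" "finite B"
      using finV cutD(1)[OF cX] cutD(1)[OF c] by (auto intro: finite_subset)
    have cV1: "card X + card Y = card V" using card_Un_disjoint[OF fin(1,2)] cutD(1,2)[OF cX] by simp
    have cV2: "card A + card B = card V" using card_Un_disjoint[OF fin(3,4)] cutD(1,2)[OF c] by simp
    have XA: "X \<inter> A \<noteq> {}"
    proof
      assume "X \<inter> A = {}"
      then have "X \<subseteq> B" using cutD(1)[OF c] cutD(1)[OF cX] by blast
      moreover have "card X = card B" using cardXY cardAB cV1 cV2 by simp
      ultimately have "X = B" using card_subset_eq fin(4) by blast
      then show False using tY st cutD(2)[OF cX] by blast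
    qed
    have YA: "Y \<inter> A \<noteq> {}"
    proof
      assume "Y \<inter> A = {}"
      then have "Y \<subseteq> B" using cutD(1)[OF c] cutD(1)[OF cX] by blast
      moreover have "card Y = card B" using cardXY cardAB cV1 cV2 by simp
      ultimately have "Y = B" using card_subset_eq fin(4) by blast
      then show False using sX st cutD(2)[OF cX] by blast
    qed
    obtain a1 a2 where a: "a1 \<in> X" "a1 \<in> A" "a2 \<in> Y" "a2 \<in> A" using XA YA by blast
    obtain qs where qs: "walk A (del_edges E F) qs" "hd qs = a1" "last qs = a2"
      using cutD(6)[OF c] a by (auto simp: connected_on_def)
    have "a2 \<notin> X" using a cutD(2)[OF cX] by blast
    then obtain xs c1 c2 ys where qeq: "qs = xs @ c1 # c2 # ys" and c12: "c1 \<in> X" "c2 \<notin> X"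
      using cross_decomp[of qs X] qs a by (auto simp: walk_def)
    have "del_edges E F c1 c2" using qs(1) qeq by (auto simp: walk_iff successively_append_iff)
    then have ec: "E c1 c2" by (simp add: del_edges_def)
    have cA: "c1 \<in> A" "c2 \<in> A" using qs(1) qeq by (auto simp: walk_def)
    have c2Y: "c2 \<in> Y" using cut_ABV[OF cX _ c12(2)] E_V ec by blast
    have "d s c2 = d s c1 + 1" using E2[OF cX ec c12(1) c2Y sX] .
    moreover have "d t c1 = d t c2 + 1" using E2'[OF cX ec c12(1) c2Y tY] .
    moreover have "d s c1 = d t c1" "d s c2 = d t c2" using eq cA by auto
    ultimately show False by simp
  qed
  have "s \<in> X0 \<or> s \<in> Y0" using cutD(1)[OF c0] sV by blast
  then show False using main[OF c0] main[OF cut_sym[OF c0]] by blast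
qed


definition swaps where "swaps F \<sigma> \<longleftrightarrow> (\<forall>u v. E u v \<and> {u,v} \<in> F \<longrightarrow> \<sigma> u = v)"

lemma cut_swaps: "cutdata F \<alpha> A B \<Longrightarrow> swaps F \<alpha>"
  using cut_swap0 unfolding swaps_def by blast

lemma side_map:
  assumes c: "cutdata F \<alpha> A B" and a: "automorphism V E \<sigma>" and sw: "swaps F \<sigma>" and p: "p \<in> A"
  shows "\<sigma> p \<in> B"
proof -
  obtain z z' where z: "E z z'" "z \<in> A" "z' \<in> B" "{z,z'} \<in> F" using cut_edge_ex[OF c] by blast
  obtain qs where qs: "walk A (del_edges E F) qs" "hd qs = p" "last qs = z"
    using cutD(6)[OF c] p z by (auto simp: connected_on_def)
  have AV: "A \<subseteq> V" using cutD(1)[OF c] by blast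
  have sq: "successively (del_edges E F) qs" "set qs \<subseteq> A" "qs \<noteq> []" using qs by (auto simp: walk_iff)
  have inj: "inj_on \<sigma> V" using a by (simp add: automorphism_def bij_betw_def)
  have pres: "del_edges E F (\<sigma> x) (\<sigma> y)" if "del_edges E F x y" for x y
  proof -
    have e: "E x y" "{x,y} \<notin> F" using that by (auto simp: del_edges_def)
    have xy: "x \<in> V" "y \<in> V" using e E_V by auto
    have e2: "E (\<sigma> x) (\<sigma> y)" using a xy e by (auto simp: automorphism_def)
    have sV: "\<sigma> x \<in> V" "\<sigma> y \<in> V" using aut_V[OF a] xy by auto
    show ?thesis
    proof (rule ccontr)
      assume "\<not> del_edges E F (\<sigma> x) (\<sigma> y)"
      then have f: "{\<sigma> x, \<sigma> y} \<in> F" using e2 by (simp add: del_edges_def)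
      then have "\<sigma> (\<sigma> x) = \<sigma> y" using sw e2 unfolding swaps_def by blast
      then have 1: "\<sigma> x = y" using inj sV xy by (auto dest: inj_onD)
      have "{\<sigma> y, \<sigma> x} \<in> F" using f by (simp add: insert_commute)
      then have "\<sigma> (\<sigma> y) = \<sigma> x" using sw E_sym[OF e2] unfolding swaps_def by blast
      then have 2: "\<sigma> y = x" using inj sV xy by (auto dest: inj_onD)
      have "{x,y} \<in> F" using f 1 2 by (simp add: insert_commute)
      then show False using e by simp
    qed
  qed
  have "successively (del_edges E F) (map \<sigma> qs)"
    unfolding successively_map using sq(1) by (rule successively_mono) (rule pres)
  moreover have "set (map \<sigma> qs) \<subseteq> V" using sq(2) AV aut_V[OF a] by auto
  ultimately have "hd (map \<sigma> qs) \<in> A \<longleftrightarrow> last (map \<sigma> qs) \<in> A"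
    using side_walk[OF c] sq(3) by simp
  moreover have "last (map \<sigma> qs) = z'" using sq(3) qs(3) sw z unfolding swaps_def by (simp add: last_map)
  moreover have "hd (map \<sigma> qs) = \<sigma> p" using sq(3) qs(2) by (simp add: hd_map)
  moreover have "z' \<notin> A" using z cutD(2)[OF c] by blast
  ultimately have "\<sigma> p \<notin> A" by simp
  moreover have "\<sigma> p \<in> V" using aut_V[OF a] p AV by blast
  ultimately show ?thesis using cutD(1)[OF c] by blast
qed

lemma U_core:
  assumes c: "cutdata F \<alpha> A B" and a1: "automorphism V E \<sigma>1" and a2: "automorphism V E \<sigma>2"
    and sw1: "swaps F \<sigma>1" and sw2: "swaps F \<sigma>2" and p: "p \<in> A" and s1: "\<sigma>1 p \<in> B" and aA: "a \<in> A"
  shows "d (\<sigma>2 p) a \<le> d (\<sigma>1 p) a"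
proof -
  have AV: "A \<subseteq> V" "B \<subseteq> V" using cutD(1)[OF c] by blast+
  have pV: "p \<in> V" "\<sigma>1 p \<in> V" "\<sigma>2 p \<in> V" "a \<in> V" using p AV aut_V a1 a2 aA by auto
  obtain ps where ps: "walk V E ps" "hd ps = \<sigma>1 p" "last ps = a" "length ps = Suc (d (\<sigma>1 p) a)"
    using d_geo pV by blast
  have "a \<notin> B" using aA cutD(2)[OF c] by blast
  then obtain xs c1 c2 ys where eq: "ps = xs @ c1 # c2 # ys" and c12: "c1 \<in> B" "c2 \<notin> B"
    using cross_decomp[of ps B] ps s1 by (auto simp: walk_def)
  have Ec: "E c1 c2" using ps(1) eq by (auto simp: walk_iff successively_append_iff)
  have cV: "c1 \<in> V" "c2 \<in> V" using Ec E_V by auto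
  have c2A: "c2 \<in> A" using cut_ABV[OF cut_sym[OF c] cV(2) c12(2)] .
  have "{c1,c2} \<in> F" using cut_edge[OF cut_sym[OF c] Ec] c12(1) c2A by simp
  then have f: "{c2,c1} \<in> F" by (simp add: insert_commute)
  have sc: "\<sigma>1 c2 = c1" "\<sigma>2 c2 = c1" using sw1 sw2 f E_sym[OF Ec] unfolding swaps_def by blast+
  have "d (\<sigma>1 p) c1 = d p c2" using d_aut[OF a1 pV(1) cV(2)] sc by simp
  moreover have "d (\<sigma>2 p) c1 = d p c2" using d_aut[OF a2 pV(1) cV(2)] sc by simp
  moreover have "d (\<sigma>1 p) c1 + 1 + d c2 a \<le> d (\<sigma>1 p) a" using d_split[OF ps eq] .
  moreover have "d (\<sigma>2 p) a \<le> d (\<sigma>2 p) c1 + d c1 a" using d_tri pV cV by blast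
  moreover have "d c1 a \<le> d c1 c2 + d c2 a" using d_tri pV cV by blast
  moreover have "d c1 c2 \<le> 1" using d_edge Ec by blast
  ultimately show ?thesis by linarith
qed

lemma U:
  assumes c: "cutdata F \<alpha> A B" and a: "automorphism V E \<sigma>" and sw: "swaps F \<sigma>" and p: "p \<in> V"
  shows "\<sigma> p = \<alpha> p"
proof -
  have gen: "\<sigma> p = \<alpha> p" if c: "cutdata F \<alpha> X Y" and pX: "p \<in> X" for X Y
  proof -
    have aa: "automorphism V E \<alpha>" using cutD(3)[OF c] .
    have swa: "swaps F \<alpha>" using cut_swaps[OF c] .
    have b1: "\<sigma> p \<in> Y" using side_map[OF c a sw pX] .
    have b2: "\<alpha> p \<in> Y" using side_map[OF c aa swa pX] .
    have "\<forall>x\<in>X. d (\<sigma> p) x = d (\<alpha> p) x"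
      using U_core[OF c a aa sw swa pX b1] U_core[OF c aa a swa sw pX b2] by (meson le_antisym)
    then show ?thesis using D[OF c b1 b2] by blast
  qed
  have "p \<in> A \<or> p \<in> B" using cutD(1)[OF c] p by blast
  then show ?thesis using gen[OF c] gen[OF cut_sym[OF c]] by blast
qed

lemma invol: assumes c: "cutdata F \<alpha> A B" and u: "u \<in> V" shows "\<alpha> (\<alpha> u) = u"
proof -
  have aa: "automorphism V E \<alpha>" using cutD(3)[OF c] .
  have b: "bij_betw \<alpha> V V" using aa by (simp add: automorphism_def)
  have sw: "swaps F (inv_into V \<alpha>)" unfolding swaps_def
  proof (intro allI impI)
    fix x y assume h: "E x y \<and> {x,y} \<in> F"
    then have "\<alpha> y = x" using cut_swap0[OF c] by blast
    moreover have "y \<in> V" using h E_V by blast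
    ultimately show "inv_into V \<alpha> x = y" using b by (auto simp: bij_betw_def inv_into_f_f)
  qed
  have "inv_into V \<alpha> u = \<alpha> u" using U[OF c aut_inv[OF aa] sw u] .
  then show ?thesis using b u by (metis bij_betw_def f_inv_into_f)
qed

definition nt :: "('a \<Rightarrow> 'a) \<Rightarrow> 'a \<Rightarrow> 'a" where "nt \<alpha> w = (if w \<in> V then \<alpha> w else w)"

lemma nt_aut: "automorphism V E \<alpha> \<Longrightarrow> automorphism V E (nt \<alpha>)"
proof -
  assume a: "automorphism V E \<alpha>"
  have "bij_betw (nt \<alpha>) V V" using a unfolding automorphism_def
    by (subst bij_betw_cong[where g=\<alpha>]) (auto simp: nt_def)
  moreover have "\<forall>u\<in>V. \<forall>v\<in>V. E u v \<longleftrightarrow> E (nt \<alpha> u) (nt \<alpha> v)"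
    using a by (simp add: automorphism_def nt_def)
  ultimately show ?thesis by (simp add: automorphism_def)
qed

definition mprop where
  "mprop a b \<sigma> \<longleftrightarrow> automorphism V E \<sigma> \<and> (\<forall>w. w \<notin> V \<longrightarrow> \<sigma> w = w) \<and>
     (\<forall>c e. Theta V E c e a b \<longrightarrow> \<sigma> c = e \<and> \<sigma> e = c)"

lemma mirror_aut_eq: "mirror_aut V E a b = (THE \<sigma>. mprop a b \<sigma>)"
  unfolding mirror_aut_def mprop_def by simp

lemma mprop_nt:
  assumes K: "K \<in> P" "{a,b} \<in> K" and ab: "E a b"
  shows "mprop a b (nt (al K))"
proof -
  obtain X Y where c: "cutdata K (al K) X Y" using cut_ex[OF K(1)] by blast
  have "\<forall>c e. Theta V E c e a b \<longrightarrow> nt (al K) c = e \<and> nt (al K) e = c"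
  proof (intro allI impI)
    fix c e assume t: "Theta V E c e a b"
    then have ce: "E c e" by (simp add: Theta_def)
    then have "{c,e} \<in> K" using Theta_iff[OF c ab K(2) ce] t by simp
    then show "nt (al K) c = e \<and> nt (al K) e = c"
      using cut_swap0[OF c ce] E_V[OF ce] by (simp add: nt_def)
  qed
  moreover have "\<forall>w. w \<notin> V \<longrightarrow> nt (al K) w = w" by (simp add: nt_def)
  ultimately show ?thesis unfolding mprop_def using nt_aut[OF cutD(3)[OF c]] by blast
qed

lemma mprop_unique:
  assumes K: "K \<in> P" "{a,b} \<in> K" and ab: "E a b" and m: "mprop a b \<sigma>"
  shows "\<sigma> = nt (al K)"
proof
  fix w
  obtain X Y where c: "cutdata K (al K) X Y" using cut_ex[OF K(1)] by blast
  have sw: "swaps K \<sigma>" unfolding swaps_def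
  proof (intro allI impI)
    fix u v assume h: "E u v \<and> {u,v} \<in> K"
    then have "Theta V E u v a b" using Theta_iff[OF c ab K(2)] by blast
    then show "\<sigma> u = v" using m by (simp add: mprop_def)
  qed
  have a: "automorphism V E \<sigma>" using m by (simp add: mprop_def)
  show "\<sigma> w = nt (al K) w"
  proof (cases "w \<in> V")
    case True then show ?thesis using U[OF c a sw True] by (simp add: nt_def)
  next
    case False then show ?thesis using m by (simp add: mprop_def nt_def)
  qed
qed

lemma MA:
  assumes K: "K \<in> P" "{a,b} \<in> K" and ab: "E a b"
  shows "mirror_aut V E a b = nt (al K)"
  unfolding mirror_aut_eq
  by (rule the_equality[where P="mprop a b", OF mprop_nt[OF K ab] mprop_unique[OF K ab]])

lemma al_facts:
  assumes K: "K \<in> P"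
  shows "\<And>u. u \<in> V \<Longrightarrow> al K u \<in> V \<and> al K (al K u) = u" "automorphism V E (al K)"
proof -
  obtain X Y where c: "cutdata K (al K) X Y" using cut_ex[OF K] by blast
  show "automorphism V E (al K)" using cutD(3)[OF c] .
  fix u assume "u \<in> V" then show "al K u \<in> V \<and> al K (al K u) = u"
    using invol[OF c] aut_V[OF cutD(3)[OF c]] by blast
qed

lemma conj_lemma:
  assumes K: "K \<in> P" "{a,b} \<in> K" and ab: "E a b" and F: "F \<in> P" and w: "w \<in> V"
  shows "mirror_aut V E (al F a) (al F b) w = al F (mirror_aut V E a b (al F w))"
proof -
  let ?\<alpha> = "al F"
  have aa: "automorphism V E ?\<alpha>" and inv: "\<And>u. u \<in> V \<Longrightarrow> ?\<alpha> u \<in> V \<and> ?\<alpha> (?\<alpha> u) = u"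
    using al_facts[OF F] by auto
  have abV: "a \<in> V" "b \<in> V" using ab E_V by auto
  have ab': "E (?\<alpha> a) (?\<alpha> b)" using aa abV ab by (auto simp: automorphism_def)
  obtain K' where K': "K' \<in> P" "{?\<alpha> a, ?\<alpha> b} \<in> K'" using class_ex[OF ab'] by blast
  let ?\<tau> = "nt ?\<alpha> \<circ> nt (al K) \<circ> nt ?\<alpha>"
  have m: "mprop a b (nt (al K))" using mprop_nt[OF K ab] .
  have "mprop (?\<alpha> a) (?\<alpha> b) ?\<tau>"
    unfolding mprop_def
  proof (intro conjI allI impI)
    show "automorphism V E ?\<tau>"
      by (intro aut_comp nt_aut aa al_facts(2)[OF K(1)])
  next
    fix x assume "x \<notin> V" then show "?\<tau> x = x" by (simp add: nt_def)
  next
    fix c e assume t: "Theta V E c e (?\<alpha> a) (?\<alpha> b)"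
    then have ce: "E c e" by (simp add: Theta_def)
    have ceV: "c \<in> V" "e \<in> V" using ce E_V by auto
    have dd: "d (?\<alpha> x) y = d x (?\<alpha> y)" if "x \<in> V" "y \<in> V" for x y
      using d_aut[OF aa, of "?\<alpha> x" y] inv that by simp
    have "Theta V E (?\<alpha> c) (?\<alpha> e) a b"
      using t ab aa ceV abV unfolding Theta_def by (auto simp: dd automorphism_def)
    then have h: "nt (al K) (?\<alpha> c) = ?\<alpha> e \<and> nt (al K) (?\<alpha> e) = ?\<alpha> c"
      using m by (simp add: mprop_def)
    have v: "?\<alpha> c \<in> V" "?\<alpha> e \<in> V" using inv ceV by auto
    show "?\<tau> c = e" using h v ceV inv by (simp add: nt_def)
    show "?\<tau> e = c" using h v ceV inv by (simp add: nt_def)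
  qed
  then have "?\<tau> = nt (al K')" using mprop_unique[OF K' ab'] by blast
  then have "mirror_aut V E (?\<alpha> a) (?\<alpha> b) = ?\<tau>" using MA[OF K' ab'] by simp
  moreover have "mirror_aut V E a b = nt (al K)" using MA[OF K ab] .
  moreover have "al K (?\<alpha> w) \<in> V" using al_facts(1)[OF K(1)] inv w by blast
  ultimately show ?thesis using w inv by (simp add: nt_def)
qed


lemma main:
  assumes xy: "E x y" and v: "v \<in> V"
  shows "\<exists>ps. gpath V E ps \<and> hd ps = v \<and> last ps = mirror_aut V E x y v \<and>
           (\<forall>w\<in>V. mirror_aut V E x y w = path_product V E ps w)"
proof -
  obtain F where F: "F \<in> P" "{x,y} \<in> F" using class_ex[OF xy] by blast
  let ?\<alpha> = "al F"
  let ?M = "mirror_aut V E"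
  have MAxy: "?M x y = nt ?\<alpha>" using MA[OF F xy] .
  have aa: "automorphism V E ?\<alpha>" and inv: "\<And>u. u \<in> V \<Longrightarrow> ?\<alpha> u \<in> V \<and> ?\<alpha> (?\<alpha> u) = u"
    using al_facts[OF F(1)] by auto
  obtain A0 B0 where c0: "cutdata F ?\<alpha> A0 B0" using cut_ex[OF F(1)] by blast
  obtain A B where c: "cutdata F ?\<alpha> A B" and vA: "v \<in> A"
  proof (cases "v \<in> A0")
    case True then show ?thesis using c0 that by blast
  next
    case False then have "v \<in> B0" using cutD(1)[OF c0] v by blast
    then show ?thesis using cut_sym[OF c0] that by blast
  qed
  obtain z z' where z: "E z z'" "z \<in> A" "z' \<in> B" "{z,z'} \<in> F" using cut_edge_ex[OF c] by blast
  have az: "?\<alpha> z = z'" using cut_swap[OF c z(1-3)] by blast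
  have AV: "A \<subseteq> V" using cutD(1)[OF c] by blast
  obtain qs where qs: "walk A (del_edges E F) qs" "hd qs = v" "last qs = z"
    using cutD(6)[OF c] vA z by (auto simp: connected_on_def)
  have "successively E qs" using qs(1) unfolding walk_iff
    by (auto elim: successively_mono simp: del_edges_def)
  then have "walk V E qs" using qs(1) AV by (auto simp: walk_iff)
  then obtain Q where Q: "walk V E Q" "distinct Q" "hd Q = v" "last Q = z" "set Q \<subseteq> set qs"
    using walk_to_path qs by metis
  have QA: "set Q \<subseteq> A" using Q(5) qs(1) by (auto simp: walk_def)
  have Qne: "Q \<noteq> []" and sQ: "successively E Q" using Q(1) by (auto simp: walk_iff)
  define R where "R = map ?\<alpha> (rev Q)"
  have Rne: "R \<noteq> []" using Qne by (simp add: R_def)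
  have hdR: "hd R = z'" using Qne Q(4) az by (simp add: R_def hd_map hd_rev)
  have lastR: "last R = ?\<alpha> v" using Qne Q(3) by (simp add: R_def last_map last_rev)
  have wR: "walk V E R" unfolding R_def by (intro walk_map aa walk_rev Q(1))
  have walkps: "walk V E (Q @ R)" using walk_append[OF Q(1) wR] Q(4) hdR z(1) by simp
  have inj: "inj_on ?\<alpha> V" using aa by (simp add: automorphism_def bij_betw_def)
  have "distinct R" unfolding R_def using Q(2) QA AV by (auto intro: inj_on_subset[OF inj] simp: distinct_map)
  moreover have "set R \<subseteq> B" unfolding R_def using QA cutD(4)[OF c] by auto
  ultimately have dist: "distinct (Q @ R)" using Q(2) QA cutD(2)[OF c] by auto
  have hdps: "hd (Q @ R) = v" using Qne Q(3) by simp
  have lastps: "last (Q @ R) = ?M x y v" using Rne lastR MAxy v by (simp add: nt_def)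
  have H: "?M a b = ?M b a \<and> (\<forall>u\<in>V. ?M a b u \<in> V \<and> ?M a b (?M a b u) = u)" if ab: "E a b" for a b
  proof -
    obtain K where K: "K \<in> P" "{a,b} \<in> K" using class_ex[OF ab] by blast
    have K2: "{b,a} \<in> K" using K(2) by (simp add: insert_commute)
    have "?M a b = nt (al K)" "?M b a = nt (al K)" using MA[OF K ab] MA[OF K(1) K2 E_sym[OF ab]] by auto
    then show ?thesis using al_facts(1)[OF K(1)] by (simp add: nt_def)
  qed
  have prod: "?M x y w = path_product V E (Q @ R) w" if w: "w \<in> V" for w
  proof -
    have pr: "pp ?M Q w \<in> V \<and> pp ?M (rev Q) (pp ?M Q w) = w" using pp_rev[of E ?M V, OF H sQ w] by blast
    let ?u = "pp ?M Q w"
    have Mz: "?M z z' = nt ?\<alpha>" using MA[OF F(1) z(4) z(1)] .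
    have H2: "?M (?\<alpha> a) (?\<alpha> b) u = ?\<alpha> (?M a b (?\<alpha> u)) \<and> ?M a b u \<in> V" if ab: "E a b" and uV: "u \<in> V" for a b u
    proof -
      obtain K where K: "K \<in> P" "{a,b} \<in> K" using class_ex[OF ab] by blast
      show ?thesis using conj_lemma[OF K ab F(1) uV] H[OF ab] uV by blast
    qed
    have sR: "successively E (rev Q)" using sQ by (auto intro: successively_mono E_sym)
    have "path_product V E (Q @ R) w = pp ?M (Q @ R) w" unfolding path_product_def by (rule pp_eq)
    also have "\<dots> = pp ?M R (?M z z' ?u)" using pp_append[OF Qne Rne] Q(4) hdR by simp
    also have "\<dots> = pp ?M R (?\<alpha> ?u)" using Mz pr by (simp add: nt_def)
    also have "\<dots> = ?\<alpha> (pp ?M (rev Q) (?\<alpha> (?\<alpha> ?u)))"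
      unfolding R_def using pp_map[of E V ?M ?\<alpha>, OF H2 inv sR] inv pr by blast
    also have "\<dots> = ?\<alpha> w" using inv pr by simp
    finally show ?thesis using MAxy w by (simp add: nt_def)
  qed
  have "gpath V E (Q @ R)" using walkps dist by (simp add: gpath_def)
  then show ?thesis using hdps lastps prod by blast
qed

end

theorem lemma5:
  fixes V :: "'a set" and E :: "'a \<Rightarrow> 'a \<Rightarrow> bool" and x y v :: 'a
  assumes "mirror_graph V E"
    and "E x y"
    and "v \<in> V"
  shows "\<exists>ps. gpath V E ps \<and> hd ps = v \<and> last ps = mirror_aut V E x y v \<and>
           (\<forall>w\<in>V. mirror_aut V E x y w = path_product V E ps w)"
proof -
  obtain P where "mirror_partition V E P" "simple_graph V E" "connected_on V E"
    using assms(1) by (auto simp: mirror_graph_def connected_graph_def)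
  then interpret mgraph V E P by unfold_locales
  show ?thesis using main assms(2,3) by blast
qed

end
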